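(* Let $V$ be a $K$-vector space and let $Moor(V)=V\otimes S(V)$ be the free $Moor$-algebra over $V$, with product determined by $(v\otimes\omega)\prec(v'\otimes 1)=v\otimes(\omega\vee v')$ and $(v\otimes\omega)\prec(v'\otimes\omega')=0$ for $\omega'\in S^n(V)$, $n\geq 1$, graded by $Moor(V)_n=V\otimes S^{n-1}(V)$ for $n\geq 1$. Then $Moor(V)$ can be equipped with a cooperation making it a connected $Moor$-bialgebra.
   Context: $K$ is a field of characteristic zero; $S(V)=K\oplus\bigoplus_{n>0}S^n(V)$ is the symmetric algebra with product $\vee$, and $1\in K=S^0(V)$; $\tau$ is the flip map. A $Moor$-bialgebra is a graded vector space $\mathcal{H}=\bigoplus_{p>0}\mathcal{H}_p$ with a bilinear operation $\prec$ satisfying $\mathcal{H}_p\prec\mathcal{H}_q\subseteq\mathcal{H}_{p+q}$, $(x\prec y)\prec z=(x\prec z)\prec y$ and $x\prec(y\prec z)=0$, together with a linear map $\Delta:\mathcal{H}\to\mathcal{H}\otimes\mathcal{H}$ (Sweedler notation $\Delta(x)=x_{(1)}\otimes x_{(2)}$) satisfying $(\mathrm{id}\otimes\Delta)\Delta=0$, $(\Delta\otimes\mathrm{id})\Delta=(\mathrm{id}\otimes\tau)(\Delta\otimes\mathrm{id})\Delta$, and $\Delta(x\prec y)=x\otimes e(y)+(x_{(1)}\prec y)\otimes x_{(2)}$ for all $x,y$, where $e:\mathcal{H}\to\mathcal{H}_1$ is the canonical projection. Set $\Delta^{(1)}=\Delta$ and $\Delta^{(r)}=(\Delta\otimes\mathrm{id}^{\otimes(r-1)})\Delta^{(r-1)}$.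 The $Moor$-bialgebra is connected if $\ker\Delta\subseteq\mathcal{H}_1$ and $\mathcal{H}=\bigcup_{r\geq 1}\ker\Delta^{(r)}$. *)

theory Defs
  imports "HOL-Library.Poly_Mapping" "HOL-Library.Multiset"
begin

(* A vector space with basis 'a over the field 'k is modelled as 'a <Rightarrow><^sub>0 'k.
  Tensor powers of such a space are modelled as ('a list <Rightarrow><^sub>0 'k): the n-th tensor power
  is spanned by lists of basis elements of length n. *)

definition smult :: "'k::field \<Rightarrow> ('a \<Rightarrow>\<^sub>0 'k) \<Rightarrow> ('a \<Rightarrow>\<^sub>0 'k)" where
  "smult c x = Poly_Mapping.map (\<lambda>v. c * v) x"

definition lin_ext :: "('a \<Rightarrow> ('b \<Rightarrow>\<^sub>0 'k::field)) \<Rightarrow> ('a \<Rightarrow>\<^sub>0 'k) \<Rightarrow> ('b \<Rightarrow>\<^sub>0 'k)" where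
  "lin_ext f x = (\<Sum>a\<in>Poly_Mapping.keys x. smult (Poly_Mapping.lookup x a) (f a))"

definition basis_vec :: "'a \<Rightarrow> ('a \<Rightarrow>\<^sub>0 'k::field)" where
  "basis_vec a = Poly_Mapping.single a 1"

definition linear_map :: "(('a \<Rightarrow>\<^sub>0 'k::field) \<Rightarrow> ('b \<Rightarrow>\<^sub>0 'k)) \<Rightarrow> bool" where
  "linear_map f \<longleftrightarrow> (\<forall>x y. f (x + y) = f x + f y) \<and> (\<forall>c x. f (smult c x) = smult c (f x))"

definition bilinear_op :: "(('a \<Rightarrow>\<^sub>0 'k::field) \<Rightarrow> ('a \<Rightarrow>\<^sub>0 'k) \<Rightarrow> ('a \<Rightarrow>\<^sub>0 'k)) \<Rightarrow> bool" where
  "bilinear_op p \<longleftrightarrow> (\<forall>y. linear_map (\<lambda>x. p x y)) \<and> (\<forall>x. linear_map (\<lambda>y. p x y))"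

definition tprod :: "('a list \<Rightarrow>\<^sub>0 'k::field) \<Rightarrow> ('a list \<Rightarrow>\<^sub>0 'k) \<Rightarrow> ('a list \<Rightarrow>\<^sub>0 'k)" where
  "tprod t u = lin_ext (\<lambda>as. lin_ext (\<lambda>bs. basis_vec (as @ bs)) u) t"

definition tens1 :: "('a \<Rightarrow>\<^sub>0 'k::field) \<Rightarrow> ('a list \<Rightarrow>\<^sub>0 'k)" where
  "tens1 x = lin_ext (\<lambda>a. basis_vec [a]) x"

definition tens2 :: "('a \<Rightarrow>\<^sub>0 'k::field) \<Rightarrow> ('a \<Rightarrow>\<^sub>0 'k) \<Rightarrow> ('a list \<Rightarrow>\<^sub>0 'k)" where
  "tens2 x y = tprod (tens1 x) (tens1 y)"

(* For an order-n tensor with n <ge> 1: apply f (H <rightarrow> H<otimes>H) to the first factor,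
  i.e. (f <otimes> id^{<otimes>(n-1)}). *)
definition on_first :: "(('a \<Rightarrow>\<^sub>0 'k::field) \<Rightarrow> ('a list \<Rightarrow>\<^sub>0 'k)) \<Rightarrow> ('a list \<Rightarrow>\<^sub>0 'k) \<Rightarrow> ('a list \<Rightarrow>\<^sub>0 'k)" where
  "on_first f t = lin_ext (\<lambda>as. tprod (f (basis_vec (hd as))) (basis_vec (tl as))) t"

definition on_second :: "(('a \<Rightarrow>\<^sub>0 'k::field) \<Rightarrow> ('a list \<Rightarrow>\<^sub>0 'k)) \<Rightarrow> ('a list \<Rightarrow>\<^sub>0 'k) \<Rightarrow> ('a list \<Rightarrow>\<^sub>0 'k)" where
  "on_second f t = lin_ext (\<lambda>as. tprod (basis_vec [as ! 0]) (f (basis_vec (as ! 1)))) t"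

definition on_first1 :: "(('a \<Rightarrow>\<^sub>0 'k::field) \<Rightarrow> ('a \<Rightarrow>\<^sub>0 'k)) \<Rightarrow> ('a list \<Rightarrow>\<^sub>0 'k) \<Rightarrow> ('a list \<Rightarrow>\<^sub>0 'k)" where
  "on_first1 g t = lin_ext (\<lambda>as. tens2 (g (basis_vec (as ! 0))) (basis_vec (as ! 1))) t"

definition flip23 :: "('a list \<Rightarrow>\<^sub>0 'k::field) \<Rightarrow> ('a list \<Rightarrow>\<^sub>0 'k)" where
  "flip23 t = lin_ext (\<lambda>as. basis_vec [as ! 0, as ! 2, as ! 1]) t"

(* Iterated coproduct: <Delta>^(1) = <Delta>, <Delta>^(r+1) = (<Delta> <otimes> id^{<otimes> r}) <Delta>^(r). *)
definition iter_cop :: "(('a \<Rightarrow>\<^sub>0 'k::field) \<Rightarrow> ('a list \<Rightarrow>\<^sub>0 'k)) \<Rightarrow> nat \<Rightarrow> ('a \<Rightarrow>\<^sub>0 'k) \<Rightarrow> ('a list \<Rightarrow>\<^sub>0 'k)" where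
  "iter_cop D r x = (on_first D ^^ (r - 1)) (D x)"

(* Graded space <Oplus>_{p>0} H_p with a homogeneous basis 'a, deg :: 'a <Rightarrow> nat. *)
definition homog :: "('a \<Rightarrow> nat) \<Rightarrow> nat \<Rightarrow> ('a \<Rightarrow>\<^sub>0 'k::field) set" where
  "homog deg p = {x. \<forall>a\<in>Poly_Mapping.keys x. deg a = p}"

definition proj1 :: "('a \<Rightarrow> nat) \<Rightarrow> ('a \<Rightarrow>\<^sub>0 'k::field) \<Rightarrow> ('a \<Rightarrow>\<^sub>0 'k)" where
  "proj1 deg x = lin_ext (\<lambda>a. if deg a = 1 then basis_vec a else 0) x"

definition moor_bialgebra ::
  "('a \<Rightarrow> nat) \<Rightarrow> (('a \<Rightarrow>\<^sub>0 'k::field) \<Rightarrow> ('a \<Rightarrow>\<^sub>0 'k) \<Rightarrow> ('a \<Rightarrow>\<^sub>0 'k))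
     \<Rightarrow> (('a \<Rightarrow>\<^sub>0 'k) \<Rightarrow> ('a list \<Rightarrow>\<^sub>0 'k)) \<Rightarrow> bool" where
  "moor_bialgebra deg pr D \<longleftrightarrow>
     (\<forall>a. deg a > 0) \<and>
     bilinear_op pr \<and>
     (\<forall>p q x y. x \<in> homog deg p \<longrightarrow> y \<in> homog deg q \<longrightarrow> pr x y \<in> homog deg (p + q)) \<and>
     (\<forall>x y z. pr (pr x y) z = pr (pr x z) y) \<and>
     (\<forall>x y z. pr x (pr y z) = 0) \<and>
     linear_map D \<and>
     (\<forall>x. \<forall>as\<in>Poly_Mapping.keys (D x). length as = 2) \<and>
     (\<forall>x. on_second D (D x) = 0) \<and>
     (\<forall>x. on_first D (D x) = flip23 (on_first D (D x))) \<and>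
     (\<forall>x y. D (pr x y) = tens2 x (proj1 deg y) + on_first1 (\<lambda>u. pr u y) (D x))"

definition connected_moor_bialgebra ::
  "('a \<Rightarrow> nat) \<Rightarrow> (('a \<Rightarrow>\<^sub>0 'k::field) \<Rightarrow> ('a \<Rightarrow>\<^sub>0 'k) \<Rightarrow> ('a \<Rightarrow>\<^sub>0 'k))
     \<Rightarrow> (('a \<Rightarrow>\<^sub>0 'k) \<Rightarrow> ('a list \<Rightarrow>\<^sub>0 'k)) \<Rightarrow> bool" where
  "connected_moor_bialgebra deg pr D \<longleftrightarrow>
     moor_bialgebra deg pr D \<and>
     (\<forall>x. D x = 0 \<longrightarrow> x \<in> homog deg 1) \<and>
     (\<forall>x. \<exists>r\<ge>1. iter_cop D r x = 0)"

(* S(V) has basis the multisets over 'b (monomials), so V <otimes> S(V) has basis 'b <times> 'b multiset;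
  the basis element (v, m) lies in V <otimes> S^{size m}(V), i.e. in Moor(V)_{size m + 1}. *)
definition moor_deg :: "'b \<times> 'b multiset \<Rightarrow> nat" where
  "moor_deg a = size (snd a) + 1"

definition moor_basis_prod :: "'b \<times> 'b multiset \<Rightarrow> 'b \<times> 'b multiset \<Rightarrow> ('b \<times> 'b multiset \<Rightarrow>\<^sub>0 'k::field)" where
  "moor_basis_prod a a' =
     (if snd a' = {#} then basis_vec (fst a, snd a + {#fst a'#}) else 0)"

definition moor_prod :: "('b \<times> 'b multiset \<Rightarrow>\<^sub>0 'k::field) \<Rightarrow> ('b \<times> 'b multiset \<Rightarrow>\<^sub>0 'k) \<Rightarrow> ('b \<times> 'b multiset \<Rightarrow>\<^sub>0 'k)" where
  "moor_prod x y = lin_ext (\<lambda>a. lin_ext (\<lambda>a'. moor_basis_prod a a') y) x"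

end

theory Submission
  imports Defs
begin


lemma lookup_smult[simp]: "Poly_Mapping.lookup (smult c x) k = c * Poly_Mapping.lookup x k"
  by (simp add: smult_def map.rep_eq when_def)

lemma smult_add_right: "smult c (x + y) = smult c x + smult c y"
  by (rule poly_mapping_eqI) (simp add: lookup_add algebra_simps)
lemma smult_add_left: "smult (a + b) x = smult a x + smult b x"
  by (rule poly_mapping_eqI) (simp add: lookup_add algebra_simps)
lemma smult_zero_left[simp]: "smult 0 x = 0"
  by (rule poly_mapping_eqI) simp
lemma smult_zero_right[simp]: "smult c 0 = 0"
  by (rule poly_mapping_eqI) simp
lemma smult_one[simp]: "smult 1 x = x"
  by (rule poly_mapping_eqI) simp
lemma smult_smult[simp]: "smult a (smult b x) = smult (a*b) x"
  by (rule poly_mapping_eqI) simp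
lemma smult_sum: "smult c (sum f S) = sum (\<lambda>i. smult c (f i)) S"
  by (rule poly_mapping_eqI) (simp add: lookup_sum sum_distrib_left)
lemma sum_smult_left: "smult (sum f S) x = sum (\<lambda>i. smult (f i) x) S"
  by (rule poly_mapping_eqI) (simp add: lookup_sum sum_distrib_right)

lemma keys_smult: "Poly_Mapping.keys (smult c x) \<subseteq> Poly_Mapping.keys x"
  by (auto simp: in_keys_iff)

lemma lin_ext_superset:
  assumes "finite S" "Poly_Mapping.keys x \<subseteq> S"
  shows "lin_ext f x = (\<Sum>a\<in>S. smult (Poly_Mapping.lookup x a) (f a))"
  unfolding lin_ext_def
  by (rule sum.mono_neutral_left) (use assms in \<open>auto simp: in_keys_iff\<close>)

lemma lin_ext_add: "lin_ext f (x + y) = lin_ext f x + lin_ext f y"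
proof -
  let ?S = "Poly_Mapping.keys x \<union> Poly_Mapping.keys y"
  have "lin_ext f (x+y) = (\<Sum>a\<in>?S. smult (Poly_Mapping.lookup (x+y) a) (f a))"
    by (rule lin_ext_superset) (auto dest: keys_add[THEN subsetD])
  also have "\<dots> = (\<Sum>a\<in>?S. smult (Poly_Mapping.lookup x a) (f a)) + (\<Sum>a\<in>?S. smult (Poly_Mapping.lookup y a) (f a))"
    by (simp add: lookup_add smult_add_left sum.distrib)
  also have "\<dots> = lin_ext f x + lin_ext f y"
    by (subst (1 2) lin_ext_superset[symmetric]) auto
  finally show ?thesis .
qed

lemma lin_ext_smult: "lin_ext f (smult c x) = smult c (lin_ext f x)"
proof -
  have "lin_ext f (smult c x) = (\<Sum>a\<in>Poly_Mapping.keys x. smult (Poly_Mapping.lookup (smult c x) a) (f a))"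
    by (rule lin_ext_superset) (auto simp: in_keys_iff)
  thus ?thesis by (simp add: lin_ext_def smult_sum)
qed

lemma linear_lin_ext: "linear_map (lin_ext f)"
  by (simp add: linear_map_def lin_ext_add lin_ext_smult)

lemma lin_ext_zero[simp]: "lin_ext f 0 = 0"
  by (simp add: lin_ext_def)

lemma lin_ext_basis[simp]: "lin_ext f (basis_vec a) = f a"
  by (simp add: lin_ext_def basis_vec_def)

lemma lin_ext_fadd: "lin_ext (\<lambda>a. f a + g a) x = lin_ext f x + lin_ext g x"
  by (simp add: lin_ext_def smult_add_right sum.distrib)
lemma lin_ext_fsmult: "lin_ext (\<lambda>a. smult c (f a)) x = smult c (lin_ext f x)"
  by (simp add: lin_ext_def smult_sum mult.commute)
lemma lin_ext_fzero[simp]: "lin_ext (\<lambda>a. 0) x = 0"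
  by (simp add: lin_ext_def)

lemma lookup_lin_ext: "Poly_Mapping.lookup (lin_ext f x) b = (\<Sum>a\<in>Poly_Mapping.keys x. Poly_Mapping.lookup x a * Poly_Mapping.lookup (f a) b)"
  by (simp add: lin_ext_def lookup_sum)

lemma keys_lin_ext: "Poly_Mapping.keys (lin_ext f x) \<subseteq> (\<Union>a\<in>Poly_Mapping.keys x. Poly_Mapping.keys (f a))"
  unfolding lin_ext_def using keys_sum keys_smult by fastforce

lemma linear_zero: "linear_map f \<Longrightarrow> f 0 = 0"
  unfolding linear_map_def by (metis add_cancel_right_right)

lemma linear_sum: "linear_map f \<Longrightarrow> f (sum g S) = sum (\<lambda>i. f (g i)) S"
  by (induction S rule: infinite_finite_induct) (auto simp: linear_zero linear_map_def)

lemma linear_is_lin_ext: "linear_map f \<Longrightarrow> f x = lin_ext (\<lambda>a. f (basis_vec a)) x"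
proof -
  assume f: "linear_map f"
  have "x = lin_ext basis_vec x"
  proof (rule poly_mapping_eqI)
    fix k
    have "(\<Sum>a\<in>Poly_Mapping.keys x. Poly_Mapping.lookup x a * (if a = k then 1 else 0)) = (\<Sum>a\<in>Poly_Mapping.keys x. if a = k then Poly_Mapping.lookup x a else 0)"
      by (rule sum.cong) auto
    also have "\<dots> = Poly_Mapping.lookup x k" by (simp add: sum.delta in_keys_iff)
    finally show "Poly_Mapping.lookup x k = Poly_Mapping.lookup (lin_ext basis_vec x) k"
      by (simp add: lookup_lin_ext basis_vec_def lookup_single when_def)
  qed
  then have "f x = f (lin_ext basis_vec x)" by simp
  also have "\<dots> = lin_ext (\<lambda>a. f (basis_vec a)) x"
    using f by (simp add: lin_ext_def linear_sum) (simp add: linear_map_def)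
  finally show ?thesis .
qed

lemma linear_ext_eq: "linear_map f \<Longrightarrow> linear_map g \<Longrightarrow> (\<And>a. f (basis_vec a) = g (basis_vec a)) \<Longrightarrow> f x = g x"
  by (subst linear_is_lin_ext, assumption, subst (2) linear_is_lin_ext, assumption) simp

lemma linear_comp: "linear_map f \<Longrightarrow> linear_map g \<Longrightarrow> linear_map (\<lambda>x. f (g x))"
  by (simp add: linear_map_def)

lemma lin_ext_comp: "linear_map g \<Longrightarrow> g (lin_ext f x) = lin_ext (\<lambda>a. g (f a)) x"
  by (simp add: lin_ext_def linear_sum) (simp add: linear_map_def)

lemma lin_ext_lin_arg: "(\<And>a. linear_map (F a)) \<Longrightarrow> linear_map (\<lambda>y. lin_ext (\<lambda>a. F a y) x)"
  by (simp add: linear_map_def lin_ext_fadd lin_ext_fsmult)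

lemma linear_tprod1: "linear_map (\<lambda>t. tprod t u)"
  unfolding tprod_def by (rule linear_lin_ext)
lemma linear_tprod2: "linear_map (\<lambda>u. tprod t u)"
  unfolding tprod_def by (rule lin_ext_lin_arg) (rule linear_lin_ext)
lemma tprod_basis[simp]: "tprod (basis_vec as) (basis_vec bs) = basis_vec (as @ bs)"
  by (simp add: tprod_def)
lemma tprod_zero1[simp]: "tprod 0 u = 0"
  by (simp add: tprod_def)
lemma tprod_zero2[simp]: "tprod t 0 = 0"
  by (simp add: tprod_def)
lemma tprod_sum1: "tprod (sum f S) u = (\<Sum>i\<in>S. tprod (f i) u)"
  using linear_sum[OF linear_tprod1] .
lemma tprod_smult1: "tprod (smult c t) u = smult c (tprod t u)"
  using linear_tprod1 unfolding linear_map_def by blast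
lemma tens1_basis[simp]: "tens1 (basis_vec a) = basis_vec [a]"
  by (simp add: tens1_def)
lemma tens2_basis[simp]: "tens2 (basis_vec a) (basis_vec b) = basis_vec [a, b]"
  by (simp add: tens2_def)
lemma linear_tens1: "linear_map tens1"
  unfolding tens1_def by (rule linear_lin_ext)
lemma linear_tens2_1: "linear_map (\<lambda>x. tens2 x y)"
  unfolding tens2_def by (rule linear_comp[OF linear_tprod1 linear_tens1])
lemma linear_tens2_2: "linear_map (\<lambda>y. tens2 x y)"
  unfolding tens2_def by (rule linear_comp[OF linear_tprod2 linear_tens1])
lemma tens2_zero1[simp]: "tens2 0 y = 0"
  by (simp add: tens2_def tens1_def)
lemma on_first_basis[simp]: "on_first f (basis_vec as) = tprod (f (basis_vec (hd as))) (basis_vec (tl as))"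
  by (simp add: on_first_def)
lemma on_second_basis[simp]: "on_second f (basis_vec as) = tprod (basis_vec [as ! 0]) (f (basis_vec (as ! 1)))"
  by (simp add: on_second_def)
lemma on_first1_basis[simp]: "on_first1 g (basis_vec as) = tens2 (g (basis_vec (as ! 0))) (basis_vec (as ! 1))"
  by (simp add: on_first1_def)
lemma flip23_basis[simp]: "flip23 (basis_vec as) = basis_vec [as ! 0, as ! 2, as ! 1]"
  by (simp add: flip23_def)
lemma linear_on_first: "linear_map (on_first f)"
  unfolding on_first_def by (rule linear_lin_ext)
lemma linear_on_second: "linear_map (on_second f)"
  unfolding on_second_def by (rule linear_lin_ext)
lemma linear_on_first1: "linear_map (on_first1 g)"
  unfolding on_first1_def by (rule linear_lin_ext)
lemma linear_flip23: "linear_map flip23"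
  unfolding flip23_def by (rule linear_lin_ext)
lemma linear_proj1: "linear_map (proj1 deg)"
  unfolding proj1_def by (rule linear_lin_ext)
lemma proj1_basis[simp]: "proj1 deg (basis_vec a) = (if deg a = 1 then basis_vec a else 0)"
  by (simp add: proj1_def)

lemma linear_prod1: "linear_map (\<lambda>x. moor_prod x y)"
  unfolding moor_prod_def by (rule linear_lin_ext)
lemma linear_prod2: "linear_map (\<lambda>y. moor_prod x y)"
  unfolding moor_prod_def by (rule lin_ext_lin_arg) (rule linear_lin_ext)
lemma prod_basis[simp]: "moor_prod (basis_vec a) (basis_vec b) = moor_basis_prod a b"
  by (simp add: moor_prod_def)
lemma prod_zero1[simp]: "moor_prod 0 y = 0"
  by (simp add: moor_prod_def)
lemma prod_zero2[simp]: "moor_prod x 0 = 0"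
  by (simp add: moor_prod_def)

lemma prod_comm_basis: "moor_prod (moor_basis_prod a b) (basis_vec c) = moor_prod (moor_basis_prod a c) (basis_vec b)"
  by (simp add: moor_basis_prod_def add_mset_commute)

lemma prod_rcomm: "moor_prod (moor_prod x y) z = moor_prod (moor_prod x z) y"
proof (rule linear_ext_eq[where f="\<lambda>x. moor_prod (moor_prod x y) z" and g="\<lambda>x. moor_prod (moor_prod x z) y"])
  show "linear_map (\<lambda>x. moor_prod (moor_prod x y) z)" by (rule linear_comp[OF linear_prod1 linear_prod1])
  show "linear_map (\<lambda>x. moor_prod (moor_prod x z) y)" by (rule linear_comp[OF linear_prod1 linear_prod1])
  fix a
  show "moor_prod (moor_prod (basis_vec a) y) z = moor_prod (moor_prod (basis_vec a) z) y"
  proof (rule linear_ext_eq[where f="\<lambda>y. moor_prod (moor_prod (basis_vec a) y) z" and g="\<lambda>y. moor_prod (moor_prod (basis_vec a) z) y"])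
    show "linear_map (\<lambda>y. moor_prod (moor_prod (basis_vec a) y) z)" by (rule linear_comp[OF linear_prod1 linear_prod2])
    show "linear_map (\<lambda>y. moor_prod (moor_prod (basis_vec a) z) y)" by (rule linear_prod2)
    fix b
    show "moor_prod (moor_prod (basis_vec a) (basis_vec b)) z = moor_prod (moor_prod (basis_vec a) z) (basis_vec b)"
    proof (rule linear_ext_eq[where f="\<lambda>z. moor_prod (moor_prod (basis_vec a) (basis_vec b)) z" and g="\<lambda>z. moor_prod (moor_prod (basis_vec a) z) (basis_vec b)"])
      show "linear_map (\<lambda>z. moor_prod (moor_prod (basis_vec a) (basis_vec b)) z)" by (rule linear_prod2)
      show "linear_map (\<lambda>z. moor_prod (moor_prod (basis_vec a) z) (basis_vec b))" by (rule linear_comp[OF linear_prod1 linear_prod2])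
      fix c
      show "moor_prod (moor_prod (basis_vec a) (basis_vec b)) (basis_vec c) = moor_prod (moor_prod (basis_vec a) (basis_vec c)) (basis_vec b)"
        using prod_comm_basis by simp
    qed
  qed
qed

lemma prod_right_zero: "moor_prod x (moor_prod y z) = 0"
proof (rule linear_ext_eq[where f="\<lambda>z. moor_prod x (moor_prod y z)" and g="\<lambda>z. 0"])
  show "linear_map (\<lambda>z. moor_prod x (moor_prod y z))" by (rule linear_comp[OF linear_prod2 linear_prod2])
  show "linear_map (\<lambda>z. 0::('a \<times> 'a multiset \<Rightarrow>\<^sub>0 'b))" by (simp add: linear_map_def)
  fix c
  show "moor_prod x (moor_prod y (basis_vec c)) = 0"
  proof (rule linear_ext_eq[where f="\<lambda>y. moor_prod x (moor_prod y (basis_vec c))" and g="\<lambda>z. 0"])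
    show "linear_map (\<lambda>y. moor_prod x (moor_prod y (basis_vec c)))" by (rule linear_comp[OF linear_prod2 linear_prod1])
    show "linear_map (\<lambda>z. 0::('a \<times> 'a multiset \<Rightarrow>\<^sub>0 'b))" by (simp add: linear_map_def)
    fix b
    show "moor_prod x (moor_prod (basis_vec b) (basis_vec c)) = 0"
    proof (rule linear_ext_eq[where f="\<lambda>x. moor_prod x (moor_prod (basis_vec b) (basis_vec c))" and g="\<lambda>z. 0"])
      show "linear_map (\<lambda>x. moor_prod x (moor_prod (basis_vec b) (basis_vec c)))" by (rule linear_prod1)
      show "linear_map (\<lambda>z. 0::('a \<times> 'a multiset \<Rightarrow>\<^sub>0 'b))" by (simp add: linear_map_def)
      fix a
      show "moor_prod (basis_vec a) (moor_prod (basis_vec b) (basis_vec c)) = 0"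
        by (simp add: moor_basis_prod_def)
    qed
  qed
qed

lemma keys_basis: "Poly_Mapping.keys (basis_vec a :: 'a \<Rightarrow>\<^sub>0 'k::field) = {a}"
  by (simp add: basis_vec_def)

lemma prod_homog: "x \<in> homog moor_deg p \<Longrightarrow> y \<in> homog moor_deg q \<Longrightarrow> moor_prod x y \<in> homog moor_deg (p + q)"
  unfolding homog_def
proof (intro CollectI ballI)
  fix c
  assume x: "x \<in> {x. \<forall>a\<in>Poly_Mapping.keys x. moor_deg a = p}" and y: "y \<in> {x. \<forall>a\<in>Poly_Mapping.keys x. moor_deg a = q}"
    and c: "c \<in> Poly_Mapping.keys (moor_prod x y)"
  from c have "c \<in> (\<Union>a\<in>Poly_Mapping.keys x. Poly_Mapping.keys (lin_ext (\<lambda>a'. moor_basis_prod a a') y))"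
    unfolding moor_prod_def by (rule subsetD[OF keys_lin_ext])
  then obtain a where a: "a \<in> Poly_Mapping.keys x" and c1: "c \<in> Poly_Mapping.keys (lin_ext (\<lambda>a'. moor_basis_prod a a') y)"
    by blast
  from c1 have "c \<in> (\<Union>b\<in>Poly_Mapping.keys y. Poly_Mapping.keys (moor_basis_prod a b :: _ \<Rightarrow>\<^sub>0 'b))"
    by (rule subsetD[OF keys_lin_ext])
  then obtain b where b: "b \<in> Poly_Mapping.keys y" and c2: "c \<in> Poly_Mapping.keys (moor_basis_prod a b :: _ \<Rightarrow>\<^sub>0 'b)"
    by blast
  from c2 have "moor_deg c = moor_deg a + moor_deg b"
    by (auto simp: moor_basis_prod_def keys_basis moor_deg_def split: if_splits)
  then show "moor_deg c = p + q" using a b x y by simp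
qed

lemma linear_smult: "linear_map f \<Longrightarrow> f (smult c x) = smult c (f x)"
  unfolding linear_map_def by blast

definition cop_b :: "'b \<times> 'b multiset \<Rightarrow> (('b \<times> 'b multiset) list \<Rightarrow>\<^sub>0 'k::field)" where
  "cop_b a = (\<Sum>w\<in>set_mset (snd a). smult (of_nat (count (snd a) w)) (basis_vec [(fst a, snd a - {#w#}), (w, {#})]))"

definition cop :: "('b \<times> 'b multiset \<Rightarrow>\<^sub>0 'k::field) \<Rightarrow> (('b \<times> 'b multiset) list \<Rightarrow>\<^sub>0 'k)" where
  "cop = lin_ext cop_b"

lemma cop_basis[simp]: "cop (basis_vec a) = cop_b a"
  by (simp add: cop_def)
lemma linear_cop: "linear_map cop"
  unfolding cop_def by (rule linear_lin_ext)
lemma cop_b_empty[simp]: "cop_b (v, {#}) = 0"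
  by (simp add: cop_b_def)

lemma cop_b_superset:
  assumes "finite S" "set_mset m \<subseteq> S"
  shows "cop_b (v, m) = (\<Sum>w\<in>S. smult (of_nat (count m w)) (basis_vec [(v, m - {#w#}), (w, {#})]))"
  unfolding cop_b_def fst_conv snd_conv
  by (rule sum.mono_neutral_left) (use assms in \<open>auto simp: not_in_iff\<close>)

lemma keys_cop_b: "Poly_Mapping.keys (cop_b (v, m) :: _ \<Rightarrow>\<^sub>0 'k::field) \<subseteq> {[(v, m - {#w#}), (w, {#})] | w. w \<in># m}"
proof -
  have "Poly_Mapping.keys (cop_b (v, m) :: _ \<Rightarrow>\<^sub>0 'k::field) \<subseteq> (\<Union>w\<in>set_mset m. Poly_Mapping.keys (smult (of_nat (count m w)) (basis_vec [(v, m - {#w#}), (w, {#})]) :: _ \<Rightarrow>\<^sub>0 'k))"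
    unfolding cop_b_def by (simp add: keys_sum)
  also have "\<dots> \<subseteq> {[(v, m - {#w#}), (w, {#})] | w. w \<in># m}"
    using keys_smult keys_basis by fastforce
  finally show ?thesis .
qed

lemma keys_cop: "Poly_Mapping.keys (cop x :: _ \<Rightarrow>\<^sub>0 'k::field) \<subseteq> (\<Union>(v,m)\<in>Poly_Mapping.keys x. {[(v, m - {#w#}), (w, {#})] | w. w \<in># m})"
  unfolding cop_def using keys_lin_ext[of cop_b x] keys_cop_b by fastforce

lemma cop_len2: "\<forall>as\<in>Poly_Mapping.keys (cop x). length as = 2"
  using keys_cop[of x] by fastforce

lemma cop_coassoc_zero: "on_second cop (cop x) = 0"
proof (rule linear_ext_eq[where f="\<lambda>x. on_second cop (cop x)" and g="\<lambda>z. 0"])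
  show "linear_map (\<lambda>x. on_second cop (cop x))" by (rule linear_comp[OF linear_on_second linear_cop])
  show "linear_map (\<lambda>z. 0::(('a \<times> 'a multiset) list \<Rightarrow>\<^sub>0 'b))" by (simp add: linear_map_def)
  fix a :: "'a \<times> 'a multiset"
  obtain v m where a: "a = (v, m)" by fastforce
  show "on_second cop (cop (basis_vec a)) = 0"
    by (simp add: a cop_b_def linear_sum[OF linear_on_second] linear_smult[OF linear_on_second])
qed

lemma on_first_cop_b: "on_first cop (cop_b (v, m) :: _ \<Rightarrow>\<^sub>0 'k::field) =
  (\<Sum>w\<in>set_mset m. \<Sum>w'\<in>set_mset m. smult (of_nat (count m w * count (m - {#w#}) w'))
      (basis_vec [(v, m - {#w#} - {#w'#}), (w', {#}), (w, {#})]))"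
proof -
  have "on_first cop (cop_b (v, m) :: _ \<Rightarrow>\<^sub>0 'k::field) =
    (\<Sum>w\<in>set_mset m. smult (of_nat (count m w)) (tprod (cop_b (v, m - {#w#})) (basis_vec [(w, {#})])))"
    by (simp add: cop_b_def linear_sum[OF linear_on_first] linear_smult[OF linear_on_first])
  also have "\<dots> = (\<Sum>w\<in>set_mset m. \<Sum>w'\<in>set_mset m. smult (of_nat (count m w * count (m - {#w#}) w'))
      (basis_vec [(v, m - {#w#} - {#w'#}), (w', {#}), (w, {#})]))"
  proof (rule sum.cong[OF refl])
    fix w assume "w \<in> set_mset m"
    have "cop_b (v, m - {#w#}) = (\<Sum>w'\<in>set_mset m. smult (of_nat (count (m - {#w#}) w')) (basis_vec [(v, m - {#w#} - {#w'#}), (w', {#})]) :: _ \<Rightarrow>\<^sub>0 'k)"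
      by (rule cop_b_superset) (auto dest: in_diffD)
    then show "smult (of_nat (count m w)) (tprod (cop_b (v, m - {#w#})) (basis_vec [(w, {#})])) =
      (\<Sum>w'\<in>set_mset m. smult (of_nat (count m w * count (m - {#w#}) w'))
      (basis_vec [(v, m - {#w#} - {#w'#}), (w', {#}), (w, {#})]) :: _ \<Rightarrow>\<^sub>0 'k)"
      by (simp add: tprod_sum1 tprod_smult1 smult_sum)
  qed
  finally show ?thesis .
qed

lemma count_sym: "count m w * count (m - {#w#}) w' = count m w' * count (m - {#w'#}) w"
  by (cases "w = w'") auto

lemma cop_coassoc: "on_first cop (cop x) = flip23 (on_first cop (cop x))"
proof (rule linear_ext_eq[where f="\<lambda>x. on_first cop (cop x)" and g="\<lambda>x. flip23 (on_first cop (cop x))"])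
  show "linear_map (\<lambda>x. on_first cop (cop x))" by (rule linear_comp[OF linear_on_first linear_cop])
  show "linear_map (\<lambda>x. flip23 (on_first cop (cop x)))"
    by (rule linear_comp[OF linear_flip23 linear_comp[OF linear_on_first linear_cop]])
  fix a :: "'a \<times> 'a multiset"
  obtain v m where a: "a = (v, m)" by fastforce
  have "flip23 (on_first cop (cop (basis_vec a))) = 
    (\<Sum>w\<in>set_mset m. \<Sum>w'\<in>set_mset m. smult (of_nat (count m w * count (m - {#w#}) w'))
      (basis_vec [(v, m - {#w#} - {#w'#}), (w, {#}), (w', {#})]))"
    by (simp add: a on_first_cop_b linear_sum[OF linear_flip23] linear_smult[OF linear_flip23])
  also have "\<dots> = (\<Sum>w'\<in>set_mset m. \<Sum>w\<in>set_mset m. smult (of_nat (count m w * count (m - {#w#}) w'))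
      (basis_vec [(v, m - {#w#} - {#w'#}), (w, {#}), (w', {#})]))"
    by (rule sum.swap)
  also have "\<dots> = on_first cop (cop (basis_vec a))"
    unfolding a cop_basis on_first_cop_b
    by (intro sum.cong refl, subst count_sym, subst diff_right_commute, rule refl)
  finally show "on_first cop (cop (basis_vec a)) = flip23 (on_first cop (cop (basis_vec a)))" by (rule sym)
qed

lemma linear_add_maps: "linear_map f \<Longrightarrow> linear_map g \<Longrightarrow> linear_map (\<lambda>x. f x + g x)"
  by (simp add: linear_map_def smult_add_right algebra_simps)

lemma cop_prod_basis_aux:
  "smult (of_nat (count (add_mset v' m) w)) (basis_vec [(v, add_mset v' m - {#w#}), (w, {#})] :: _ \<Rightarrow>\<^sub>0 'k::field)
   = smult (of_nat (count m w)) (basis_vec [(v, add_mset v' (m - {#w#})), (w, {#})])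
     + (if w = v' then basis_vec [(v, m), (v', {#})] else 0)"
proof (cases "w = v'")
  case True
  show ?thesis
  proof (cases "w \<in># m")
    case True
    then have "add_mset v' (m - {#w#}) = m" using \<open>w = v'\<close> by (simp add: insert_DiffM)
    then show ?thesis using \<open>w = v'\<close> by (simp add: smult_add_left add.commute)
  next
    case False
    then show ?thesis using \<open>w = v'\<close> by (simp add: not_in_iff)
  qed
next
  case False
  then show ?thesis by simp
qed

lemma cop_prod_basis:
  "cop (moor_basis_prod a b :: _ \<Rightarrow>\<^sub>0 'k::field) = tens2 (basis_vec a) (proj1 moor_deg (basis_vec b)) + on_first1 (\<lambda>u. moor_prod u (basis_vec b)) (cop_b a)"
proof -
  obtain v m where a: "a = (v, m)" by fastforce
  obtain v' m' where b: "b = (v', m')" by fastforce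
  show ?thesis
  proof (cases "m' = {#}")
    case False
    then show ?thesis
      by (simp add: a b moor_basis_prod_def moor_deg_def linear_zero[OF linear_cop] linear_zero[OF linear_tens2_2]
          cop_b_def linear_sum[OF linear_on_first1] linear_smult[OF linear_on_first1])
  next
    case True
    let ?S = "insert v' (set_mset m)"
    have "cop (moor_basis_prod a b :: _ \<Rightarrow>\<^sub>0 'k::field) = cop_b (v, add_mset v' m)"
      by (simp add: a b True moor_basis_prod_def)
    also have "\<dots> = (\<Sum>w\<in>?S. smult (of_nat (count (add_mset v' m) w)) (basis_vec [(v, add_mset v' m - {#w#}), (w, {#})]))"
      by (simp add: cop_b_def)
    also have "\<dots> = (\<Sum>w\<in>?S. smult (of_nat (count m w)) (basis_vec [(v, add_mset v' (m - {#w#})), (w, {#})]))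
       + (\<Sum>w\<in>?S. (if w = v' then basis_vec [(v, m), (v', {#})] else 0))"
      by (subst sum.distrib[symmetric], rule sum.cong[OF refl], rule cop_prod_basis_aux)
    also have "(\<Sum>w\<in>?S. (if w = v' then basis_vec [(v, m), (v', {#})] else 0)) = basis_vec [(v, m), (v', {#})]"
      by (simp add: sum.delta')
    also have "(\<Sum>w\<in>?S. smult (of_nat (count m w)) (basis_vec [(v, add_mset v' (m - {#w#})), (w, {#})]))
       = (\<Sum>w\<in>set_mset m. smult (of_nat (count m w)) (basis_vec [(v, add_mset v' (m - {#w#})), (w, {#})]) :: _ \<Rightarrow>\<^sub>0 'k)"
      by (rule sum.mono_neutral_right) (auto simp: not_in_iff)
    also have "\<dots> = on_first1 (\<lambda>u. moor_prod u (basis_vec b)) (cop_b a)"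
      by (simp add: a b True cop_b_def moor_basis_prod_def linear_sum[OF linear_on_first1] linear_smult[OF linear_on_first1])
    finally show ?thesis
      by (simp add: a b True moor_deg_def add.commute)
  qed
qed

lemma cop_prod: "cop (moor_prod x y) = tens2 x (proj1 moor_deg y) + on_first1 (\<lambda>u. moor_prod u y) (cop x)"
proof (rule linear_ext_eq[where f="\<lambda>x. cop (moor_prod x y)" and g="\<lambda>x. tens2 x (proj1 moor_deg y) + on_first1 (\<lambda>u. moor_prod u y) (cop x)"])
  show "linear_map (\<lambda>x. cop (moor_prod x y))" by (rule linear_comp[OF linear_cop linear_prod1])
  show "linear_map (\<lambda>x. tens2 x (proj1 moor_deg y) + on_first1 (\<lambda>u. moor_prod u y) (cop x))"
    by (rule linear_add_maps[OF linear_tens2_1 linear_comp[OF linear_on_first1 linear_cop]])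
  fix a
  show "cop (moor_prod (basis_vec a) y) = tens2 (basis_vec a) (proj1 moor_deg y) + on_first1 (\<lambda>u. moor_prod u y) (cop (basis_vec a))"
  proof (rule linear_ext_eq[where f="\<lambda>y. cop (moor_prod (basis_vec a) y)" and g="\<lambda>y. tens2 (basis_vec a) (proj1 moor_deg y) + on_first1 (\<lambda>u. moor_prod u y) (cop (basis_vec a))"])
    show "linear_map (\<lambda>y. cop (moor_prod (basis_vec a) y))" by (rule linear_comp[OF linear_cop linear_prod2])
    show "linear_map (\<lambda>y. tens2 (basis_vec a) (proj1 moor_deg y) + on_first1 (\<lambda>u. moor_prod u y) (cop (basis_vec a)))"
      unfolding on_first1_def
      by (rule linear_add_maps[OF linear_comp[OF linear_tens2_2 linear_proj1] lin_ext_lin_arg])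
         (rule linear_comp[OF linear_tens2_1 linear_prod2])
    fix b
    show "cop (moor_prod (basis_vec a) (basis_vec b)) = tens2 (basis_vec a) (proj1 moor_deg (basis_vec b)) + on_first1 (\<lambda>u. moor_prod u (basis_vec b)) (cop (basis_vec a))"
      by (simp add: cop_prod_basis del: proj1_basis)
  qed
qed



lemma lookup_basis: "Poly_Mapping.lookup (basis_vec a :: _ \<Rightarrow>\<^sub>0 'k::field) k = (if a = k then 1 else 0)"
  by (simp add: basis_vec_def lookup_single when_def)

lemma lookup_cop_b:
  assumes w: "w \<in># m"
  shows "Poly_Mapping.lookup (cop_b (v', m') :: _ \<Rightarrow>\<^sub>0 'k::field) [(v, m - {#w#}), (w, {#})]
    = (if (v', m') = (v, m) then of_nat (count m w) else 0)"
proof -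
  have "Poly_Mapping.lookup (cop_b (v', m') :: _ \<Rightarrow>\<^sub>0 'k::field) [(v, m - {#w#}), (w, {#})]
     = (\<Sum>u\<in>set_mset m'. if u = w then (if v' = v \<and> m' - {#w#} = m - {#w#} then of_nat (count m' u) else 0) else 0)"
    unfolding cop_b_def fst_conv snd_conv lookup_sum
    by (rule sum.cong) (auto simp: lookup_basis)
  also have "\<dots> = (if w \<in># m' \<and> v' = v \<and> m' - {#w#} = m - {#w#} then of_nat (count m' w) else 0)"
    by (simp add: sum.delta)
  also have "\<dots> = (if (v', m') = (v, m) then of_nat (count m w) else 0)"
  proof -
    have "w \<in># m' \<Longrightarrow> m' - {#w#} = m - {#w#} \<Longrightarrow> m' = m"
      using w by (metis insert_DiffM)
    then show ?thesis using w by auto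
  qed
  finally show ?thesis .
qed

lemma cop_ker: "cop (x :: _ \<Rightarrow>\<^sub>0 'k::field_char_0) = 0 \<Longrightarrow> x \<in> homog moor_deg 1"
proof (rule ccontr)
  assume c: "cop x = 0" and "x \<notin> homog moor_deg 1"
  then obtain v m where a: "(v, m) \<in> Poly_Mapping.keys x" and "m \<noteq> {#}"
    unfolding homog_def moor_deg_def by auto
  then obtain w where w: "w \<in># m" by fastforce
  have "Poly_Mapping.lookup (cop x) [(v, m - {#w#}), (w, {#})]
     = (\<Sum>a'\<in>Poly_Mapping.keys x. if a' = (v, m) then Poly_Mapping.lookup x a' * of_nat (count m w) else 0)"
    unfolding cop_def lookup_lin_ext
    by (rule sum.cong) (auto simp: lookup_cop_b[OF w] split: if_splits)
  also have "\<dots> = Poly_Mapping.lookup x (v, m) * of_nat (count m w)"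
    using a by (simp add: sum.delta)
  also have "\<dots> \<noteq> 0" using a w by (simp add: in_keys_iff)
  finally show False using c by simp
qed

definition Pn :: "nat \<Rightarrow> (('b \<times> 'b multiset) list \<Rightarrow>\<^sub>0 'k::field) \<Rightarrow> bool" where
  "Pn n t \<longleftrightarrow> (\<forall>as\<in>Poly_Mapping.keys t. as \<noteq> [] \<and> size (snd (hd as)) < n)"

lemma Pn_0: "Pn 0 t \<Longrightarrow> t = 0"
  unfolding Pn_def by auto

lemma keys_tprod: "c \<in> Poly_Mapping.keys (tprod t u) \<Longrightarrow> \<exists>xs ys. c = xs @ ys \<and> xs \<in> Poly_Mapping.keys t \<and> ys \<in> Poly_Mapping.keys u"
proof -
  assume "c \<in> Poly_Mapping.keys (tprod t u)"
  then have "c \<in> (\<Union>xs\<in>Poly_Mapping.keys t. Poly_Mapping.keys (lin_ext (\<lambda>bs. basis_vec (xs @ bs)) u))"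
    unfolding tprod_def by (rule subsetD[OF keys_lin_ext])
  then obtain xs where xs: "xs \<in> Poly_Mapping.keys t" and c: "c \<in> Poly_Mapping.keys (lin_ext (\<lambda>bs. basis_vec (xs @ bs)) u)"
    by blast
  from c have "c \<in> (\<Union>ys\<in>Poly_Mapping.keys u. Poly_Mapping.keys (basis_vec (xs @ ys) :: _ \<Rightarrow>\<^sub>0 'b))"
    by (rule subsetD[OF keys_lin_ext])
  then obtain ys where "ys \<in> Poly_Mapping.keys u" "c \<in> Poly_Mapping.keys (basis_vec (xs @ ys) :: _ \<Rightarrow>\<^sub>0 'b)"
    by blast
  then show ?thesis using xs by (auto simp: keys_basis)
qed

lemma Pn_step:
  fixes t :: "('b \<times> 'b multiset) list \<Rightarrow>\<^sub>0 'k::field"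
  shows "Pn (Suc n) t \<Longrightarrow> Pn n (on_first cop t)"
  unfolding Pn_def
proof
  fix bs
  assume P: "\<forall>as\<in>Poly_Mapping.keys t. as \<noteq> [] \<and> size (snd (hd as)) < Suc n"
    and bs: "bs \<in> Poly_Mapping.keys (on_first cop t)"
  from bs have "bs \<in> (\<Union>as\<in>Poly_Mapping.keys t. Poly_Mapping.keys (tprod ((cop :: _ \<Rightarrow> (_ \<Rightarrow>\<^sub>0 'k)) (basis_vec (hd as))) (basis_vec (tl as))))"
    unfolding on_first_def by (rule subsetD[OF keys_lin_ext])
  then obtain as where as: "as \<in> Poly_Mapping.keys t" and bs2: "bs \<in> Poly_Mapping.keys (tprod ((cop :: _ \<Rightarrow> (_ \<Rightarrow>\<^sub>0 'k)) (basis_vec (hd as))) (basis_vec (tl as)))"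
    by blast
  obtain v m where h: "hd as = (v, m)" by fastforce
  have sz: "size m < Suc n" using P as h by fastforce
  from keys_tprod[OF bs2] obtain xs ys where xy: "bs = xs @ ys" "xs \<in> Poly_Mapping.keys ((cop :: _ \<Rightarrow> (_ \<Rightarrow>\<^sub>0 'k)) (basis_vec (hd as)))"
    by blast
  then have "xs \<in> Poly_Mapping.keys (cop_b (v, m) :: _ \<Rightarrow>\<^sub>0 'k)" by (simp add: h)
  then have "xs \<in> {[(v, m - {#w#}), (w, {#})] | w. w \<in># m}" by (rule subsetD[OF keys_cop_b])
  then obtain w where "w \<in># m" "xs = [(v, m - {#w#}), (w, {#})]" by blast
  then show "bs \<noteq> [] \<and> size (snd (hd bs)) < n" using sz size_Diff1_less[of w m] xy(1) by auto
qed

lemma Pn_iter: "Pn (n + k) t \<Longrightarrow> Pn n ((on_first cop ^^ k) t)"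
proof (induction k arbitrary: n t)
  case 0 then show ?case by simp
next
  case (Suc k)
  then have "Pn (Suc n + k) t" by simp
  then have "Pn (Suc n) ((on_first cop ^^ k) t)" by (rule Suc.IH)
  then show ?case by (simp add: Pn_step)
qed

lemma cop_Pn: "Pn (\<Sum>a\<in>Poly_Mapping.keys x. size (snd a)) (cop x)"
  unfolding Pn_def
proof
  fix as assume as: "as \<in> Poly_Mapping.keys (cop x)"
  then have "as \<in> (\<Union>(v,m)\<in>Poly_Mapping.keys x. {[(v, m - {#w#}), (w, {#})] | w. w \<in># m})"
    by (rule subsetD[OF keys_cop])
  then obtain a where a: "a \<in> Poly_Mapping.keys x" "as \<in> (case a of (v,m) \<Rightarrow> {[(v, m - {#w#}), (w, {#})] | w. w \<in># m})"
    by blast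
  obtain v m where am: "a = (v, m)" by fastforce
  from a(2) obtain w where "w \<in># m" "as = [(v, m - {#w#}), (w, {#})]" unfolding am by auto
  with a(1) am have vm: "(v, m) \<in> Poly_Mapping.keys x" "w \<in># m" "as = [(v, m - {#w#}), (w, {#})]" by auto
  have "size m \<le> (\<Sum>a\<in>Poly_Mapping.keys x. size (snd a))"
    using member_le_sum[of "(v, m)" "Poly_Mapping.keys x" "\<lambda>a. size (snd a)"] vm(1) by simp
  then show "as \<noteq> [] \<and> size (snd (hd as)) < (\<Sum>a\<in>Poly_Mapping.keys x. size (snd a))"
    using vm size_Diff1_less[of w m] by auto
qed

lemma cop_nilp: "\<exists>r\<ge>1. iter_cop cop r x = 0"
proof (intro exI conjI)
  let ?N = "\<Sum>a\<in>Poly_Mapping.keys x. size (snd a)"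
  show "1 \<le> ?N + 1" by simp
  have "Pn (0 + ?N) (cop x)" using cop_Pn by simp
  then have "Pn 0 ((on_first cop ^^ ?N) (cop x))" by (rule Pn_iter)
  then show "iter_cop cop (?N + 1) x = 0" unfolding iter_cop_def by (simp add: Pn_0)
qed

theorem theorem4p2:
  "\<exists>D :: ('b \<times> 'b multiset \<Rightarrow>\<^sub>0 'k::field_char_0) \<Rightarrow> (('b \<times> 'b multiset) list \<Rightarrow>\<^sub>0 'k).
     connected_moor_bialgebra moor_deg moor_prod D"
proof (intro exI)
  show "connected_moor_bialgebra moor_deg moor_prod (cop :: ('b \<times> 'b multiset \<Rightarrow>\<^sub>0 'k::field_char_0) \<Rightarrow> _)"
    unfolding connected_moor_bialgebra_def moor_bialgebra_def
  proof (intro conjI allI impI)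
    show "\<And>a. 0 < moor_deg a" by (simp add: moor_deg_def)
    show "bilinear_op (moor_prod :: ('b \<times> 'b multiset \<Rightarrow>\<^sub>0 'k) \<Rightarrow> _)"
      by (simp add: bilinear_op_def linear_prod1 linear_prod2)
    show "\<And>x. (cop :: ('b \<times> 'b multiset \<Rightarrow>\<^sub>0 'k) \<Rightarrow> _) x = 0 \<Longrightarrow> x \<in> homog moor_deg 1" by (rule cop_ker)
    show "\<And>x. \<exists>r\<ge>1. iter_cop (cop :: ('b \<times> 'b multiset \<Rightarrow>\<^sub>0 'k) \<Rightarrow> _) r x = 0" by (rule cop_nilp)
  qed (auto simp: prod_homog prod_rcomm prod_right_zero linear_cop cop_len2 cop_coassoc_zero cop_prod cop_ker cop_nilp
        intro: cop_coassoc)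
qed

end
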